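(* Let $M$ be a tame paving matroid of rank $n$ with set of dependent hyperplanes $\mathcal{L}$, and let $\mathcal{Q}=\{Q_1,\ldots,Q_k\}$ be a nice partition of $\mathcal{L}$. Let $\operatorname{rank}$ denote the rank function of $M(\mathcal{Q})$. Then (i) $\operatorname{rank}(l)=n-1$ for every $l\in\mathcal{L}$; and (ii) if $l_1,l_2\in\mathcal{L}$ lie in different parts of $\mathcal{Q}$, then $\operatorname{rank}(l_1\cup l_2)=n$.
   Context: A matroid of rank $n$ is paving ($n$-paving) if every circuit has size $n$ or $n+1$; a dependent hyperplane is a maximal subset of size at least $n$ all of whose $n$-subsets are circuits; tame means any three distinct dependent hyperplanes have empty intersection. For a partition $\mathcal{Q}$ of $\mathcal{L}$, set $H_i=\bigcup_{l\in Q_i}l$; $M(\mathcal{Q})$ is the matroid on the ground set of $M$ whose circuits are (Type 1) the $(n-1)$-subsets contained in $H_i\cap H_j$ for some $i\ne j$, (Type 2) the $n$-subsets of some $H_i$ containing no Type 1 set, (Type 3) the $(n+1)$-subsets containing no Type 1 or Type 2 set. For $L\subseteq\mathcal{L}$ with $|L|\ge2$, $M^L$ is the $n$-paving matroid on $\bigcup_{l\in L}l$ whose set of dependent hyperplanes is $L$. An $n$-paving matroid $N$ on $E$ is liftable if for every tuple $(\gamma_e)_{e\in E}$ in $\mathbb{C}^n$ spanning a hyperplane $H$ and every $q\notin H$ there exist scalars $z_e$ with $(\gamma_e+z_eq)$ in the circuit variety of $N$ (tuples whose restriction to every dependent set of $N$ is linearly dependent) and not all in a common hyperplane. $\mathcal{Q}$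 is nice if (i) $M^{Q_i}$ is not liftable whenever $|Q_i|\ge2$, and (ii) no $l\notin Q_i$ satisfies $l\subseteq\bigcup_{l'\in Q_i}l'$. *)

theory Defs
  imports "HOL-Analysis.Analysis" "HOL-Library.Disjoint_Sets"
begin

definition matroid_circuits :: "'e set \<Rightarrow> 'e set set \<Rightarrow> bool" where
  "matroid_circuits E C \<longleftrightarrow> finite E \<and> (\<forall>c\<in>C. c \<subseteq> E) \<and> {} \<notin> C
     \<and> (\<forall>c1\<in>C. \<forall>c2\<in>C. c1 \<subseteq> c2 \<longrightarrow> c1 = c2)
     \<and> (\<forall>c1\<in>C. \<forall>c2\<in>C. \<forall>e. c1 \<noteq> c2 \<and> e \<in> c1 \<inter> c2 \<longrightarrow> (\<exists>c3\<in>C. c3 \<subseteq> (c1 \<union> c2) - {e}))"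

definition mindep :: "'e set set \<Rightarrow> 'e set \<Rightarrow> bool" where
  "mindep C Y \<longleftrightarrow> finite Y \<and> \<not> (\<exists>c\<in>C. c \<subseteq> Y)"

definition mrank :: "'e set set \<Rightarrow> 'e set \<Rightarrow> nat" where
  "mrank C X = Max (card ` {Y. Y \<subseteq> X \<and> mindep C Y})"

definition mdependent :: "'e set \<Rightarrow> 'e set set \<Rightarrow> 'e set \<Rightarrow> bool" where
  "mdependent E C D \<longleftrightarrow> D \<subseteq> E \<and> (\<exists>c\<in>C. c \<subseteq> D)"

definition paving :: "nat \<Rightarrow> 'e set \<Rightarrow> 'e set set \<Rightarrow> bool" where
  "paving n E C \<longleftrightarrow> matroid_circuits E C \<and> mrank C E = n
     \<and> (\<forall>c\<in>C. card c = n \<or> card c = n + 1)"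

definition all_nsubsets_circuits :: "nat \<Rightarrow> 'e set set \<Rightarrow> 'e set \<Rightarrow> bool" where
  "all_nsubsets_circuits n C H \<longleftrightarrow> (\<forall>S. S \<subseteq> H \<and> card S = n \<longrightarrow> S \<in> C)"

definition dep_hyperplane :: "nat \<Rightarrow> 'e set \<Rightarrow> 'e set set \<Rightarrow> 'e set \<Rightarrow> bool" where
  "dep_hyperplane n E C H \<longleftrightarrow> H \<subseteq> E \<and> card H \<ge> n \<and> all_nsubsets_circuits n C H
     \<and> (\<forall>H'. H \<subseteq> H' \<and> H' \<subseteq> E \<and> card H' \<ge> n \<and> all_nsubsets_circuits n C H' \<longrightarrow> H' = H)"

definition dep_hyps :: "nat \<Rightarrow> 'e set \<Rightarrow> 'e set set \<Rightarrow> 'e set set" where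
  "dep_hyps n E C = {H. dep_hyperplane n E C H}"

definition tame :: "nat \<Rightarrow> 'e set \<Rightarrow> 'e set set \<Rightarrow> bool" where
  "tame n E C \<longleftrightarrow> (\<forall>H1\<in>dep_hyps n E C. \<forall>H2\<in>dep_hyps n E C. \<forall>H3\<in>dep_hyps n E C.
      H1 \<noteq> H2 \<and> H1 \<noteq> H3 \<and> H2 \<noteq> H3 \<longrightarrow> H1 \<inter> H2 \<inter> H3 = {})"

definition MQ_type1 :: "nat \<Rightarrow> 'e set \<Rightarrow> 'e set set set \<Rightarrow> 'e set set" where
  "MQ_type1 n E Q = {S. S \<subseteq> E \<and> card S = n - 1 \<and>
      (\<exists>Qi\<in>Q. \<exists>Qj\<in>Q. Qi \<noteq> Qj \<and> S \<subseteq> \<Union>Qi \<inter> \<Union>Qj)}"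

definition MQ_type2 :: "nat \<Rightarrow> 'e set \<Rightarrow> 'e set set set \<Rightarrow> 'e set set" where
  "MQ_type2 n E Q = {S. S \<subseteq> E \<and> card S = n \<and> (\<exists>Qi\<in>Q. S \<subseteq> \<Union>Qi)
      \<and> \<not> (\<exists>T\<in>MQ_type1 n E Q. T \<subseteq> S)}"

definition MQ_type3 :: "nat \<Rightarrow> 'e set \<Rightarrow> 'e set set set \<Rightarrow> 'e set set" where
  "MQ_type3 n E Q = {S. S \<subseteq> E \<and> card S = n + 1
      \<and> \<not> (\<exists>T\<in>MQ_type1 n E Q \<union> MQ_type2 n E Q. T \<subseteq> S)}"

definition MQ_circuits :: "nat \<Rightarrow> 'e set \<Rightarrow> 'e set set set \<Rightarrow> 'e set set" where
  "MQ_circuits n E Q = MQ_type1 n E Q \<union> MQ_type2 n E Q \<union> MQ_type3 n E Q"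

text \<open>The n-paving matroid on the union of L whose dependent hyperplanes are the members of L:
its circuits are the n-subsets of members of L and the (n+1)-subsets of the ground set
containing no such n-subset.\<close>
definition paving_of_hyps_circuits :: "nat \<Rightarrow> 'e set set \<Rightarrow> 'e set set" where
  "paving_of_hyps_circuits n L =
     {S. S \<subseteq> \<Union>L \<and> card S = n \<and> (\<exists>l\<in>L. S \<subseteq> l)}
   \<union> {S. S \<subseteq> \<Union>L \<and> card S = n + 1 \<and> \<not> (\<exists>T. T \<subseteq> S \<and> card T = n \<and> (\<exists>l\<in>L. T \<subseteq> l))}"

definition tuple_dependent :: "('e \<Rightarrow> complex^'n) \<Rightarrow> 'e set \<Rightarrow> bool" where
  "tuple_dependent v D \<longleftrightarrow> \<not> inj_on v D \<or> vec.dependent (v ` D)"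

definition circuit_variety :: "'e set \<Rightarrow> 'e set set \<Rightarrow> ('e \<Rightarrow> complex^'n) set" where
  "circuit_variety E C = {v. \<forall>D. mdependent E C D \<longrightarrow> tuple_dependent v D}"

definition liftable :: "'n::finite itself \<Rightarrow> 'e set \<Rightarrow> 'e set set \<Rightarrow> bool" where
  "liftable _ E C \<longleftrightarrow>
     (\<forall>(\<gamma> :: 'e \<Rightarrow> complex^'n) q.
        vec.dim (vec.span (\<gamma> ` E)) = CARD('n) - 1 \<and> q \<notin> vec.span (\<gamma> ` E) \<longrightarrow>
        (\<exists>z :: 'e \<Rightarrow> complex.
           (\<lambda>e. \<gamma> e + z e *s q) \<in> circuit_variety E C
         \<and> vec.span ((\<lambda>e. \<gamma> e + z e *s q) ` E) = UNIV))"

definition nice :: "'n::finite itself \<Rightarrow> nat \<Rightarrow> 'e set set \<Rightarrow> 'e set set set \<Rightarrow> bool" where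
  "nice T n L Q \<longleftrightarrow>
     (\<forall>Qi\<in>Q. card Qi \<ge> 2 \<longrightarrow> \<not> liftable T (\<Union>Qi) (paving_of_hyps_circuits n Qi))
   \<and> (\<forall>Qi\<in>Q. \<forall>l\<in>L. l \<notin> Qi \<longrightarrow> \<not> l \<subseteq> \<Union>Qi)"

end

theory Submission
  imports Defs
begin

lemma dh_basic:
  assumes "l \<in> dep_hyps n E C"
  shows "l \<subseteq> E" "n \<le> card l" "all_nsubsets_circuits n C l"
  using assms unfolding dep_hyps_def dep_hyperplane_def by auto

lemma ansc: "all_nsubsets_circuits n C H \<Longrightarrow> S \<subseteq> H \<Longrightarrow> card S = n \<Longrightarrow> S \<in> C"
  unfolding all_nsubsets_circuits_def by blast

lemma dh_union_eq:
  assumes "l \<in> dep_hyps n E C" "l' \<in> dep_hyps n E C" "finite E"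
    "all_nsubsets_circuits n C (l \<union> l')"
  shows "l = l'"
proof -
  have sub: "l \<union> l' \<subseteq> E" using dh_basic assms by blast
  have fin: "finite (l \<union> l')" using sub assms(3) finite_subset by blast
  have c1: "n \<le> card (l \<union> l')"
    using dh_basic(2)[OF assms(1)] card_mono[OF fin, of l] by auto
  have "l \<union> l' = l" using assms(1) sub c1 assms(4)
    unfolding dep_hyps_def dep_hyperplane_def by blast
  moreover have "l \<union> l' = l'" using assms(2) sub c1 assms(4)
    unfolding dep_hyps_def dep_hyperplane_def by blast
  ultimately show ?thesis by blast
qed

lemma dh_n1:
  assumes "l \<in> dep_hyps 1 E C" "l' \<in> dep_hyps 1 E C" "finite E"
  shows "l = l'"
proof (rule dh_union_eq[OF assms])
  show "all_nsubsets_circuits 1 C (l \<union> l')"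
    unfolding all_nsubsets_circuits_def
  proof (intro allI impI)
    fix S assume S: "S \<subseteq> l \<union> l' \<and> card S = 1"
    then have c1: "card S = 1" by simp
    then obtain x where x: "S = {x}" by (rule card_1_singletonE)
    have h1: "\<And>S. S \<subseteq> l \<and> card S = 1 \<Longrightarrow> S \<in> C"
      using dh_basic(3)[OF assms(1)] unfolding all_nsubsets_circuits_def by blast
    have h2: "\<And>S. S \<subseteq> l' \<and> card S = 1 \<Longrightarrow> S \<in> C"
      using dh_basic(3)[OF assms(2)] unfolding all_nsubsets_circuits_def by blast
    have "x \<in> l \<or> x \<in> l'" using S x by blast
    then show "S \<in> C"
    proof
      assume "x \<in> l"
      then show ?thesis using h1[of S] x c1 by blast
    next
      assume "x \<in> l'"
      then show ?thesis using h2[of S] x c1 by blast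
    qed
  qed
qed

lemma dh_n2_aux:
  assumes pav: "paving 2 E C" and l: "l \<in> dep_hyps 2 E C" and l': "l' \<in> dep_hyps 2 E C"
    and p: "p \<in> l" "p \<in> l'" and a: "a \<in> l" "a \<notin> l'" and b: "b \<in> l'" "b \<notin> l"
  shows "{a, b} \<in> C"
proof -
  have mc: "matroid_circuits E C" and cc: "\<forall>c\<in>C. card c = 2 \<or> card c = 3"
    using pav unfolding paving_def by auto
  have ab: "a \<noteq> b" "a \<noteq> p" "b \<noteq> p" using a b p by auto
  have c1: "{a, p} \<in> C" by (rule ansc[OF dh_basic(3)[OF l]]) (use a p ab in auto)
  have c2: "{p, b} \<in> C" by (rule ansc[OF dh_basic(3)[OF l']]) (use b p ab in auto)
  have ne: "{a, p} \<noteq> {p, b}" using ab by (metis doubleton_eq_iff)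
  have elim: "\<forall>c1\<in>C. \<forall>c2\<in>C. \<forall>e. c1 \<noteq> c2 \<and> e \<in> c1 \<inter> c2 \<longrightarrow> (\<exists>c3\<in>C. c3 \<subseteq> (c1 \<union> c2) - {e})"
    using mc unfolding matroid_circuits_def by (elim conjE)
  have "{a, p} \<noteq> {p, b} \<and> p \<in> {a, p} \<inter> {p, b}" using ne by simp
  then obtain c3 where c3: "c3 \<in> C" "c3 \<subseteq> ({a, p} \<union> {p, b}) - {p}"
    using elim c1 c2 by meson
  have sub: "c3 \<subseteq> {a, b}" using c3 ab by auto
  have "card c3 = 2 \<or> card c3 = 3" using cc c3(1) by blast
  then have ge: "2 \<le> card c3" by linarith
  have cab: "card {a, b} = 2" using ab by simp
  have "c3 = {a, b}" using card_seteq[OF _ sub] ge cab by simp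
  then show ?thesis using c3 by simp
qed

lemma dh_n2:
  assumes pav: "paving 2 E C" and l: "l \<in> dep_hyps 2 E C" and l': "l' \<in> dep_hyps 2 E C"
    and p: "p \<in> l" "p \<in> l'"
  shows "l = l'"
proof -
  have finE: "finite E" using pav unfolding paving_def matroid_circuits_def by auto
  show ?thesis
  proof (rule dh_union_eq[OF l l' finE])
    show "all_nsubsets_circuits 2 C (l \<union> l')"
      unfolding all_nsubsets_circuits_def
    proof (intro allI impI)
      fix S assume S: "S \<subseteq> l \<union> l' \<and> card S = 2"
      then obtain x y where xy: "S = {x, y}" "x \<noteq> y" by (meson card_2_iff)
      show "S \<in> C"
      proof (cases "S \<subseteq> l")
        case True
        then show ?thesis using ansc[OF dh_basic(3)[OF l]] S by blast
      next
        case F1: False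
        show ?thesis
        proof (cases "S \<subseteq> l'")
          case True
          then show ?thesis using ansc[OF dh_basic(3)[OF l']] S by blast
        next
          case False
          then have "(x \<in> l \<and> x \<notin> l' \<and> y \<in> l' \<and> y \<notin> l) \<or> (y \<in> l \<and> y \<notin> l' \<and> x \<in> l' \<and> x \<notin> l)"
            using F1 S xy by auto
          then show ?thesis
          proof
            assume h: "x \<in> l \<and> x \<notin> l' \<and> y \<in> l' \<and> y \<notin> l"
            show ?thesis using dh_n2_aux[OF pav l l' p, of x y] h xy by auto
          next
            assume h: "y \<in> l \<and> y \<notin> l' \<and> x \<in> l' \<and> x \<notin> l"
            show ?thesis using dh_n2_aux[OF pav l l' p, of y x] h xy by (auto simp: insert_commute)
          qed
        qed
      qed
    qed
  qed
qed

lemma dh_small: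
  assumes "paving n E C" "1 \<le> n" "n \<le> 2" "l \<in> dep_hyps n E C" "l' \<in> dep_hyps n E C"
    "p \<in> l" "p \<in> l'"
  shows "l = l'"
proof -
  have finE: "finite E" using assms(1) unfolding paving_def matroid_circuits_def by auto
  show ?thesis
  proof (cases "n = 1")
    case True
    then show ?thesis using dh_n1[of l E C l'] assms(4,5) finE by simp
  next
    case False
    then have "n = 2" using assms by auto
    then show ?thesis using dh_n2[of E C l l' p] assms(1,4-7) by simp
  qed
qed

lemma part_distinct:
  assumes "partition_on L Q" "Qx \<in> Q" "Qy \<in> Q" "Qx \<noteq> Qy" "l \<in> Qx" "l' \<in> Qy"
  shows "l \<noteq> l'"
  using disjointD[OF partition_onD2[OF assms(1)] assms(2,3,4)] assms(5,6) by blast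

lemma colour_unique:
  assumes tame: "tame n E C" and part: "partition_on (dep_hyps n E C) Q"
    and Q: "Qa \<in> Q" "Qx \<in> Q" "Qy \<in> Q" "Qx \<noteq> Qy" "Qa \<noteq> Qx" "Qa \<noteq> Qy"
    and l: "l \<in> Qa" "p \<in> l" and px: "p \<in> \<Union>Qx" and py: "p \<in> \<Union>Qy"
  shows False
proof -
  obtain l1 where l1: "l1 \<in> Qx" "p \<in> l1" using px by blast
  obtain l2 where l2: "l2 \<in> Qy" "p \<in> l2" using py by blast
  have U: "\<Union>Q = dep_hyps n E C" using partition_onD1[OF part] by simp
  have d: "l \<noteq> l1" "l \<noteq> l2" "l1 \<noteq> l2"
    using part_distinct[OF part Q(1) Q(2) Q(5) l(1) l1(1)] part_distinct[OF part Q(1) Q(3) Q(6) l(1) l2(1)]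
      part_distinct[OF part Q(2) Q(3) Q(4) l1(1) l2(1)] by auto
  have m: "l \<in> dep_hyps n E C" "l1 \<in> dep_hyps n E C" "l2 \<in> dep_hyps n E C"
    using U Q l l1 l2 by blast+
  have "l \<inter> l1 \<inter> l2 = {}" using tame m d unfolding tame_def by blast
  then show False using l l1 l2 by blast
qed


lemma mrank_eqI:
  assumes "finite X" "S \<subseteq> X" "mindep C S" "card S = k"
    "\<And>Y. Y \<subseteq> X \<Longrightarrow> mindep C Y \<Longrightarrow> card Y \<le> k"
  shows "mrank C X = k"
proof -
  have "finite {Y. Y \<subseteq> X \<and> mindep C Y}" using assms(1) by simp
  then show ?thesis unfolding mrank_def
    by (rule Max_eqI[OF finite_imageI]) (use assms in auto)
qed

lemma mindep_card_le:
  assumes "mindep C Y" "\<And>S. S \<subseteq> Y \<Longrightarrow> card S = k + 1 \<Longrightarrow> \<exists>c\<in>C. c \<subseteq> S"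
  shows "card Y \<le> k"
proof (rule ccontr)
  assume "\<not> card Y \<le> k"
  then have "k + 1 \<le> card Y" by simp
  then obtain S where "S \<subseteq> Y" "card S = k + 1" by (meson obtain_subset_with_card_n)
  then obtain c where "c \<in> C" "c \<subseteq> Y" using assms(2) by blast
  then show False using assms(1) unfolding mindep_def by blast
qed

lemma two_elems:
  assumes "2 \<le> card l"
  obtains p q where "p \<in> l" "q \<in> l" "p \<noteq> q"
proof -
  obtain T where "T \<subseteq> l" "card T = 2" using assms by (meson obtain_subset_with_card_n)
  then show ?thesis using that by (metis card_2_iff insert_subset)
qed

theorem lemma8p2:
  fixes E :: "'e set" and C :: "'e set set" and n :: nat and Q :: "'e set set set"
  assumes "paving n E C"
    and "tame n E C"
    and "CARD('n::finite) = n"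
    and "partition_on (dep_hyps n E C) Q"
    and "nice TYPE('n) n (dep_hyps n E C) Q"
  shows "(\<forall>l\<in>dep_hyps n E C. mrank (MQ_circuits n E Q) l = n - 1)
       \<and> (\<forall>Qi\<in>Q. \<forall>Qj\<in>Q. Qi \<noteq> Qj \<longrightarrow>
            (\<forall>l1\<in>Qi. \<forall>l2\<in>Qj. mrank (MQ_circuits n E Q) (l1 \<union> l2) = n))"
proof -
  have pav: "paving n E C" by (rule assms(1))
  have tame: "tame n E C" by (rule assms(2))
  have part: "partition_on (dep_hyps n E C) Q" by (rule assms(4))
  have mcE: "matroid_circuits E C" using assms(1) unfolding paving_def by (elim conjE)
  have finE: "finite E" using mcE unfolding matroid_circuits_def by (elim conjE)
  have n1: "1 \<le> n" proof -
    have "0 < CARD('n)" by simp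
    then show ?thesis using assms(3) by simp
  qed
  have U: "\<Union>Q = dep_hyps n E C" using partition_onD1[OF part] by simp
  have nice2: "\<And>Qi l. Qi \<in> Q \<Longrightarrow> l \<in> dep_hyps n E C \<Longrightarrow> l \<notin> Qi \<Longrightarrow> \<not> l \<subseteq> \<Union>Qi"
    using assms(5) unfolding nice_def by (elim conjE) metis
  have inL: "\<And>Qa l. Qa \<in> Q \<Longrightarrow> l \<in> Qa \<Longrightarrow> l \<in> dep_hyps n E C"
    using U by (metis UnionI)
  have finL: "\<And>l. l \<in> dep_hyps n E C \<Longrightarrow> finite l" by (rule finite_subset[OF dh_basic(1) finE])
  have nonempty: "\<And>Qa. Qa \<in> Q \<Longrightarrow> Qa \<noteq> {}" using partition_onD3[OF part] by metis
  have goodS: "\<exists>S. S \<subseteq> l \<and> card S = n - 1 \<and>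
      (\<forall>Qx\<in>Q. \<forall>Qy\<in>Q. Qx \<noteq> Qy \<longrightarrow> \<not> S \<subseteq> \<Union>Qx \<inter> \<Union>Qy)"
    if a: "Qa \<in> Q" "l \<in> Qa" for Qa l
  proof -
    have ld: "l \<in> dep_hyps n E C" using inL a by blast
    have cl: "n \<le> card l" using dh_basic(2)[OF ld] .
    have fl: "finite l" using finL ld .
    consider "n = 1" | "n = 2" | "3 \<le> n" using n1 by linarith
    then show ?thesis
    proof cases
      case 1
      have "\<not> {} \<subseteq> \<Union>Qx \<inter> \<Union>Qy" if xyq: "Qx \<in> Q" "Qy \<in> Q" "Qx \<noteq> Qy" for Qx Qy
      proof -
        obtain l1 where l1: "l1 \<in> Qx" using nonempty[OF xyq(1)] by blast
        obtain l2 where l2: "l2 \<in> Qy" using nonempty[OF xyq(2)] by blast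
        have "l1 \<noteq> l2" using part_distinct[OF part xyq l1 l2] .
        moreover have "l1 = l2" using dh_n1[of l1 E C l2] inL[OF xyq(1) l1] inL[OF xyq(2) l2] finE 1
          by simp
        ultimately show ?thesis by blast
      qed
      then show ?thesis using 1 by (intro exI[of _ "{}"]) auto
    next
      case 2
      have "card l \<noteq> 0" using cl 2 by simp
      then have "l \<noteq> {}" by (metis card.empty)
      then obtain p where p: "p \<in> l" by blast
      have good: "\<not> {p} \<subseteq> \<Union>Qx \<inter> \<Union>Qy" if q: "Qx \<in> Q" "Qy \<in> Q" "Qx \<noteq> Qy" for Qx Qy
      proof (rule notI)
        assume h: "{p} \<subseteq> \<Union>Qx \<inter> \<Union>Qy"
        have px: "p \<in> \<Union>Qx" and py: "p \<in> \<Union>Qy" using h by auto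
        have "\<exists>Qz\<in>Q. Qz \<noteq> Qa \<and> p \<in> \<Union>Qz"
        proof (cases "Qx = Qa")
          case True
          then have "Qy \<noteq> Qa" using q(3) by simp
          then show ?thesis using q(2) py by blast
        next
          case False
          then show ?thesis using q(1) px by blast
        qed
        then obtain Qz l' where z: "Qz \<in> Q" "Qz \<noteq> Qa" "l' \<in> Qz" "p \<in> l'" by blast
        have "l \<noteq> l'" using part_distinct[OF part a(1) z(1) z(2)[symmetric] a(2) z(3)] .
        moreover have "l = l'" using dh_small[OF pav n1 _ ld inL[OF z(1,3)] p z(4)] 2 by simp
        ultimately show False by blast
      qed
      show ?thesis
      proof (intro exI[of _ "{p}"] conjI)
        show "{p} \<subseteq> l" using p by simp
        show "card {p} = n - 1" using 2 by simp
        show "\<forall>Qx\<in>Q. \<forall>Qy\<in>Q. Qx \<noteq> Qy \<longrightarrow> \<not> {p} \<subseteq> \<Union>Qx \<inter> \<Union>Qy"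
          using good by blast
      qed
    next
      case 3
      show ?thesis
      proof (rule ccontr)
        assume H: "\<not> ?thesis"
        have H': "\<exists>Qx\<in>Q. \<exists>Qy\<in>Q. Qx \<noteq> Qy \<and> S \<subseteq> \<Union>Qx \<inter> \<Union>Qy"
          if "S \<subseteq> l" "card S = n - 1" for S
          using H that by metis
        have pair: "\<exists>Qx\<in>Q. Qx \<noteq> Qa \<and> p \<in> \<Union>Qx \<and> q \<in> \<Union>Qx"
          if pq: "p \<in> l" "q \<in> l" "p \<noteq> q" for p q
        proof -
          have "card l - card {p, q} \<le> card (l - {p, q})" by (rule diff_card_le_card_Diff) simp
          then have "n - 3 \<le> card (l - {p, q})" using cl pq by simp
          then obtain T where T: "T \<subseteq> l - {p, q}" "card T = n - 3" "finite T"
            by (meson obtain_subset_with_card_n)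
          define S where "S = insert p (insert q T)"
          have qT: "q \<notin> T" and pT: "p \<notin> insert q T" using T pq by auto
          have "card S = Suc (Suc (card T))" unfolding S_def
            using T(3) qT pT by simp
          then have "card S = n - 1" using T(2) 3 by simp
          moreover have "S \<subseteq> l" unfolding S_def using T pq by auto
          ultimately obtain Qx Qy where xy: "Qx \<in> Q" "Qy \<in> Q" "Qx \<noteq> Qy" "S \<subseteq> \<Union>Qx \<inter> \<Union>Qy"
            using H' by metis
          have pS: "p \<in> S" "q \<in> S" unfolding S_def by auto
          have inx: "p \<in> \<Union>Qx" "q \<in> \<Union>Qx" "p \<in> \<Union>Qy" "q \<in> \<Union>Qy"
            using xy(4) pS by auto
          show ?thesis
          proof (cases "Qx = Qa")
            case True
            then have "Qy \<noteq> Qa" using xy(3) by simp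
            then show ?thesis using xy(2) inx(3,4) by (intro bexI[of _ Qy]) simp_all
          next
            case False
            then show ?thesis using xy(1) inx(1,2) by (intro bexI[of _ Qx]) simp_all
          qed
        qed
        obtain p0 q0 where pq0: "p0 \<in> l" "q0 \<in> l" "p0 \<noteq> q0" proof -
          have "2 \<le> card l" using cl 3 by linarith
          then show ?thesis using two_elems that by blast
        qed
        obtain Qx0 where x0: "Qx0 \<in> Q" "Qx0 \<noteq> Qa" "p0 \<in> \<Union>Qx0" using pair[OF pq0] by blast
        have "q \<in> \<Union>Qx0" if q: "q \<in> l" for q
        proof (cases "q = p0")
          case True
          then show ?thesis using x0 by simp
        next
          case False
          then obtain Qx where x: "Qx \<in> Q" "Qx \<noteq> Qa" "p0 \<in> \<Union>Qx" "q \<in> \<Union>Qx"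
            using pair[OF pq0(1) q] False by metis
          have "Qx = Qx0"
          proof (rule ccontr)
            assume "Qx \<noteq> Qx0"
            then show False using colour_unique[OF tame part a(1) x(1) x0(1) _ x(2)[symmetric] x0(2)[symmetric] a(2) pq0(1) x(3) x0(3)]
              by blast
          qed
          then show ?thesis using x by simp
        qed
        then have "l \<subseteq> \<Union>Qx0" by blast
        moreover have "l \<notin> Qx0" using part_distinct[OF part a(1) x0(1) x0(2)[symmetric] a(2)] by blast
        ultimately show False using nice2[OF x0(1) ld] by blast
      qed
    qed
  qed
  show ?thesis
  proof (intro conjI ballI impI)
    fix l assume ld: "l \<in> dep_hyps n E C"
    then obtain Qa where a: "Qa \<in> Q" "l \<in> Qa" using U by blast
    obtain S where S: "S \<subseteq> l" "card S = n - 1"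
      "\<forall>Qx\<in>Q. \<forall>Qy\<in>Q. Qx \<noteq> Qy \<longrightarrow> \<not> S \<subseteq> \<Union>Qx \<inter> \<Union>Qy" using goodS[OF a] by blast
    have fl: "finite l" using finL ld .
    have fS: "finite S" using S fl finite_subset by blast
    show "mrank (MQ_circuits n E Q) l = n - 1"
    proof (rule mrank_eqI[OF fl S(1) _ S(2)])
      show "mindep (MQ_circuits n E Q) S"
        unfolding mindep_def
      proof (intro conjI notI fS)
        assume "\<exists>c\<in>MQ_circuits n E Q. c \<subseteq> S"
        then obtain c where c: "c \<in> MQ_circuits n E Q" "c \<subseteq> S" by blast
        have cc: "card c \<le> n - 1" using card_mono[OF fS c(2)] S(2) by simp
        from c(1) show False unfolding MQ_circuits_def
        proof (elim UnE)
          assume "c \<in> MQ_type1 n E Q"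
          then obtain Qx Qy where "Qx \<in> Q" "Qy \<in> Q" "Qx \<noteq> Qy" "c \<subseteq> \<Union>Qx \<inter> \<Union>Qy" "card c = n - 1"
            unfolding MQ_type1_def by blast
          moreover have "c = S" using card_subset_eq[OF fS c(2)] calculation S(2) by simp
          ultimately show False using S(3) by blast
        next
          assume "c \<in> MQ_type2 n E Q" then show False using cc n1 unfolding MQ_type2_def by auto
        next
          assume "c \<in> MQ_type3 n E Q" then show False using cc n1 unfolding MQ_type3_def by auto
        qed
      qed
    next
      fix Y assume Y: "Y \<subseteq> l" "mindep (MQ_circuits n E Q) Y"
      show "card Y \<le> n - 1"
      proof (rule mindep_card_le[OF Y(2)])
        fix S' assume S': "S' \<subseteq> Y" "card S' = n - 1 + 1"
        show "\<exists>c\<in>MQ_circuits n E Q. c \<subseteq> S'"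
        proof (cases "\<exists>T\<in>MQ_type1 n E Q. T \<subseteq> S'")
          case True
          then show ?thesis unfolding MQ_circuits_def by blast
        next
          case False
          have "S' \<subseteq> E" using S' Y dh_basic(1)[OF ld] by blast
          moreover have "S' \<subseteq> \<Union>Qa" using S' Y a by blast
          ultimately have "S' \<in> MQ_type2 n E Q" using False S' n1 a(1)
            unfolding MQ_type2_def by auto
          then show ?thesis unfolding MQ_circuits_def by blast
        qed
      qed
    qed
  next
    fix Qi Qj l1 l2 assume ij: "Qi \<in> Q" "Qj \<in> Q" "Qi \<noteq> Qj" and l12: "l1 \<in> Qi" "l2 \<in> Qj"
    have ld1: "l1 \<in> dep_hyps n E C" and ld2: "l2 \<in> dep_hyps n E C" using inL ij l12 by blast+
    obtain S1 where S1: "S1 \<subseteq> l1" "card S1 = n - 1"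
      "\<forall>Qx\<in>Q. \<forall>Qy\<in>Q. Qx \<noteq> Qy \<longrightarrow> \<not> S1 \<subseteq> \<Union>Qx \<inter> \<Union>Qy" using goodS[OF ij(1) l12(1)] by blast
    have "l2 \<notin> Qi" using part_distinct[OF part ij(2) ij(1) ij(3)[symmetric] l12(2)] by blast
    then obtain q where q: "q \<in> l2" "q \<notin> \<Union>Qi" using nice2[OF ij(1) ld2] by blast
    have S1H: "S1 \<subseteq> \<Union>Qi" using S1(1) l12(1) by blast
    have qS1: "q \<notin> S1" using S1H q by blast
    have fX: "finite (l1 \<union> l2)" using finL ld1 ld2 by blast
    have fS1: "finite S1" using S1(1) finL[OF ld1] finite_subset by blast
    define S where "S = insert q S1"
    have fS: "finite S" unfolding S_def using fS1 by simp
    have cS: "card S = n" unfolding S_def using fS1 qS1 S1(2) n1 by simp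
    have SX: "S \<subseteq> l1 \<union> l2" unfolding S_def using S1 q by blast
    show "mrank (MQ_circuits n E Q) (l1 \<union> l2) = n"
    proof (rule mrank_eqI[OF fX SX _ cS])
      show "mindep (MQ_circuits n E Q) S"
        unfolding mindep_def
      proof (intro conjI notI fS)
        assume "\<exists>c\<in>MQ_circuits n E Q. c \<subseteq> S"
        then obtain c where c: "c \<in> MQ_circuits n E Q" "c \<subseteq> S" by blast
        have cc: "card c \<le> n" using card_mono[OF fS c(2)] cS by simp
        from c(1) show False unfolding MQ_circuits_def
        proof (elim UnE)
          assume "c \<in> MQ_type1 n E Q"
          then obtain Qx Qy where xy: "Qx \<in> Q" "Qy \<in> Q" "Qx \<noteq> Qy" "c \<subseteq> \<Union>Qx \<inter> \<Union>Qy"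
            and cn: "card c = n - 1"
            unfolding MQ_type1_def by blast
          show False
          proof (cases "q \<in> c")
            case False
            then have "c \<subseteq> S1" using c(2) unfolding S_def by blast
            then have "c = S1" using card_subset_eq[OF fS1] cn S1(2) by simp
            then show False using S1(3) xy by blast
          next
            case True
            have qx: "Qx \<noteq> Qi" "Qy \<noteq> Qi" using True xy q by blast+
            show False
            proof (cases "3 \<le> n")
              case True
              have "card (c - {q}) \<noteq> 0" using cn True \<open>q \<in> c\<close> fS c(2)
                by (simp add: finite_subset)
              then have "c - {q} \<noteq> {}" by (metis card.empty)
              then obtain p where p: "p \<in> c" "p \<noteq> q" by blast
              then have "p \<in> S1" "p \<in> l1" using c(2) S1(1) unfolding S_def by blast+
              then show False using colour_unique[OF tame part ij(1) xy(1) xy(2) xy(3) qx(1)[symmetric] qx(2)[symmetric] l12(1)]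
                p xy by blast
            next
              case False
              obtain l' l'' where ll: "l' \<in> Qx" "q \<in> l'" "l'' \<in> Qy" "q \<in> l''"
                using xy \<open>q \<in> c\<close> by blast
              have "l' \<noteq> l''" using part_distinct[OF part xy(1,2,3)] ll by blast
              moreover have "l' = l''" using dh_small[OF pav n1 _ inL[OF xy(1) ll(1)] inL[OF xy(2) ll(3)] ll(2) ll(4)]
                False by simp
              ultimately show False by blast
            qed
          qed
        next
          assume c2: "c \<in> MQ_type2 n E Q"
          then obtain Qx where x: "Qx \<in> Q" "c \<subseteq> \<Union>Qx" and cn: "card c = n"
            unfolding MQ_type2_def by blast
          have "c = S" using card_subset_eq[OF fS c(2)] cn cS by simp
          show False
          proof (cases "Qx = Qi")
            case True
            then show False using x \<open>c = S\<close> q unfolding S_def by blast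
          next
            case False
            then have "S1 \<subseteq> \<Union>Qi \<inter> \<Union>Qx" using S1H x \<open>c = S\<close> unfolding S_def by blast
            then show False using S1(3) False x ij by blast
          qed
        next
          assume "c \<in> MQ_type3 n E Q" then show False using cc unfolding MQ_type3_def by auto
        qed
      qed
    next
      fix Y assume Y: "Y \<subseteq> l1 \<union> l2" "mindep (MQ_circuits n E Q) Y"
      show "card Y \<le> n"
      proof (rule mindep_card_le[OF Y(2)])
        fix S' assume S': "S' \<subseteq> Y" "card S' = n + 1"
        show "\<exists>c\<in>MQ_circuits n E Q. c \<subseteq> S'"
        proof (cases "\<exists>T\<in>MQ_type1 n E Q \<union> MQ_type2 n E Q. T \<subseteq> S'")
          case True
          then show ?thesis unfolding MQ_circuits_def by blast
        next
          case False
          have "S' \<subseteq> E" using S' Y dh_basic(1)[OF ld1] dh_basic(1)[OF ld2] by blast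
          then have "S' \<in> MQ_type3 n E Q" using False S' unfolding MQ_type3_def by auto
          then show ?thesis unfolding MQ_circuits_def by blast
        qed
      qed
    qed
  qed
qed

end
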